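(* Let $n\ge3$, $\alpha\in(0,n)$, $p,q>0$ with $pq>1$ and $p\le q$, and assume $\frac{1}{p+1}+\frac{1}{q+1}\le\frac{n-\alpha}{n}$. Let $u,v$ be positive solutions on $\mathbb{R}^n$ of $$u(x)=\int_{\mathbb{R}^n}\frac{v^q(y)\,dy}{|x-y|^{n-\alpha}},\qquad v(x)=\int_{\mathbb{R}^n}\frac{u^p(y)\,dy}{|x-y|^{n-\alpha}}.$$ Suppose $u,v$ are bounded and, as $|x|\to\infty$: $u(x)\simeq|x|^{\alpha-n}$; and $v(x)\simeq|x|^{\alpha-n}$ if $p(n-\alpha)>n$, $v(x)\simeq|x|^{\alpha-n}\ln|x|$ if $p(n-\alpha)=n$, $v(x)\simeq|x|^{(\alpha-n)(p+1)+n}$ if $p(n-\alpha)<n$. Then $(u,v)\in L^{r_0}(\mathbb{R}^n)\times L^{s_0}(\mathbb{R}^n)$, where $r_0=\frac{n(pq-1)}{\alpha(q+1)}$, $s_0=\frac{n(pq-1)}{\alpha(p+1)}$.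
   Context: Positive solutions are positive measurable functions satisfying both integral identities (finite) at every point. "$f(x)\simeq g(x)$ as $|x|\to\infty$" means there is $C>0$ with $g(x)/C\le f(x)\le Cg(x)$ for all sufficiently large $|x|$. *)

theory Defs
  imports "HOL-Analysis.Analysis"
begin

definition riesz_pot :: "real \<Rightarrow> ((real ^ 'n) \<Rightarrow> real) \<Rightarrow> real ^ 'n \<Rightarrow> ennreal" where
  "riesz_pot \<alpha> f x =
     (\<integral>\<^sup>+ y. ennreal (f y / norm (x - y) powr (real CARD('n) - \<alpha>)) \<partial>lebesgue)"

definition asym_equiv :: "('a::real_normed_vector \<Rightarrow> real) \<Rightarrow> ('a \<Rightarrow> real) \<Rightarrow> bool" where
  "asym_equiv f g \<longleftrightarrow> (\<exists>C>0. \<exists>R. \<forall>x. norm x \<ge> R \<longrightarrow> g x / C \<le> f x \<and> f x \<le> C * g x)"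

definition in_Lp :: "real \<Rightarrow> ((real ^ 'n) \<Rightarrow> real) \<Rightarrow> bool" where
  "in_Lp r f \<longleftrightarrow> f \<in> borel_measurable lebesgue \<and>
     (\<integral>\<^sup>+ x. ennreal (\<bar>f x\<bar> powr r) \<partial>lebesgue) < \<infinity>"

end

theory Submission
  imports Defs
begin

lemma ennreal_le_suminf: "(f k :: ennreal) \<le> (\<Sum>i. f i)"
proof -
  have "(\<Sum>i\<in>{k}. f i) \<le> (\<Sum>i. f i)"
    by (rule sum_le_suminf) (auto intro: summableI)
  thus ?thesis by simp
qed

lemma dyadic_index:
  fixes t R :: real assumes "R > 0" "R \<le> t"
  shows "\<exists>k::nat. 2^k * R \<le> t \<and> t \<le> 2^(Suc k) * R"
proof -
  define k where "k = nat \<lfloor>log 2 (t / R)\<rfloor>"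
  have tR: "t / R \<ge> 1" using assms by (simp add: field_simps)
  have l0: "log 2 (t/R) \<ge> 0" using tR by simp
  have "real k \<le> log 2 (t/R)" unfolding k_def using l0 by linarith
  hence "2 powr real k \<le> 2 powr log 2 (t/R)" by simp
  hence a: "2^k \<le> t/R" using tR by (simp add: powr_realpow)
  have "log 2 (t/R) < real k + 1" unfolding k_def using l0 by linarith
  hence "2 powr log 2 (t/R) < 2 powr (real k + 1)" by (simp del: powr_add)
  hence b: "t/R < 2^(Suc k)" using tR by (simp add: powr_realpow powr_add)
  show ?thesis using a b assms by (intro exI[of _ k]) (auto simp: field_simps)
qed

lemma tail_integral:
  fixes g R :: real
  assumes g: "g > real DIM('a)" and R: "R > 0"
  shows "(\<integral>\<^sup>+x. indicator {x::'a::euclidean_space. R \<le> norm x} x * ennreal (norm x powr (-g)) \<partial>lborel) < \<infinity>"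
proof -
  define n where "n = DIM('a)"
  define V where "V = unit_ball_vol (real n)"
  define c where "c k = (2^k*R) powr (-g)" for k :: nat
  define \<rho> where "\<rho> = (2::real) powr (real n - g)"
  have \<rho>: "0 < \<rho>" "\<rho> < 1"
  proof -
    show "0 < \<rho>" by (simp add: \<rho>_def)
    have "(2::real) powr (real n - g) < 2 powr 0" using g unfolding n_def by (intro powr_less_mono) auto
    thus "\<rho> < 1" by (simp add: \<rho>_def)
  qed
  have V: "V \<ge> 0" unfolding V_def by simp
  have pt: "indicator {x::'a. R \<le> norm x} x * ennreal (norm x powr (-g))
      \<le> (\<Sum>k. ennreal (c k) * indicator (cball 0 (2^(Suc k)*R)) x)" for x :: 'a
  proof (cases "R \<le> norm x")
    case True
    then obtain k :: nat where k: "2^k*R \<le> norm x" "norm x \<le> 2^(Suc k)*R"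
      using dyadic_index[OF R] by blast
    have pos: "0 < 2^k*R" using R by simp
    have "norm x powr (-g) \<le> c k" unfolding c_def
      using k(1) pos g by (intro powr_mono2') auto
    hence "indicator {x::'a. R \<le> norm x} x * ennreal (norm x powr (-g)) \<le>
        ennreal (c k) * indicator (cball 0 (2^(Suc k)*R)) x"
      using True k(2) by (auto intro!: ennreal_leI)
    also have "\<dots> \<le> (\<Sum>k. ennreal (c k) * indicator (cball 0 (2^(Suc k)*R)) x)"
      by (rule ennreal_le_suminf)
    finally show ?thesis .
  qed simp
  have termeq: "ennreal (c k) * emeasure lborel (cball (0::'a) (2^(Suc k)*R))
      = ennreal (V * 2^n * R powr (real n - g) * \<rho>^k)" for k
  proof -
    have "emeasure lborel (cball (0::'a) (2^(Suc k)*R)) = ennreal (V * (2^(Suc k)*R)^n)"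
      unfolding V_def n_def using R by (subst emeasure_cball) auto
    moreover have "c k * (V * (2^(Suc k)*R)^n) = V * 2^n * R powr (real n - g) * \<rho>^k"
    proof -
      have "(2^(Suc k)*R)^n = 2^n * (2^k*R) powr (real n)" using R
        by (simp add: powr_realpow power_mult_distrib field_simps)
      moreover have "(2^k*R) powr (-g) * (2^k*R) powr (real n) = (2^k*R) powr (real n - g)"
        by (simp add: powr_add[symmetric])
      moreover have "(2^k*R) powr (real n - g) = R powr (real n - g) * \<rho>^k"
        using R unfolding \<rho>_def
        by (simp add: powr_mult powr_realpow[symmetric] powr_powr mult.commute)
      ultimately show ?thesis unfolding c_def
        by (metis (no_types, lifting) mult.commute mult.left_commute)
    qed
    moreover have "c k \<ge> 0" unfolding c_def by simp
    ultimately show ?thesis using V R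
      by (metis ennreal_mult'' zero_le_power zero_le_mult_iff less_imp_le zero_le_numeral mult_nonneg_nonneg)
  qed
  have "(\<integral>\<^sup>+x. indicator {x::'a. R \<le> norm x} x * ennreal (norm x powr (-g)) \<partial>lborel)
      \<le> (\<integral>\<^sup>+(x::'a). (\<Sum>k. ennreal (c k) * indicator (cball 0 (2^(Suc k)*R)) x) \<partial>lborel)"
    by (rule nn_integral_mono) (rule pt)
  also have "\<dots> = (\<Sum>k. ennreal (c k) * emeasure lborel (cball (0::'a) (2^(Suc k)*R)))"
  proof -
    have m: "(\<lambda>x::'a. ennreal (c k) * indicator (cball 0 (2^(Suc k)*R)) x) \<in> borel_measurable lborel" for k
      by (intro borel_measurable_times_ennreal borel_measurable_const borel_measurable_indicator) (auto intro: borel_closed)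
    show ?thesis by (subst nn_integral_suminf[OF m]) (auto simp: nn_integral_cmult_indicator)
  qed
  also have "\<dots> = (\<Sum>k. ennreal (V * 2^n * R powr (real n - g) * \<rho>^k))"
    using termeq by presburger
  also have "\<dots> < \<infinity>"
  proof -
    have "summable (\<lambda>k. V * 2^n * R powr (real n - g) * \<rho>^k)"
      using \<rho> by (intro summable_mult summable_geometric) auto
    hence "(\<Sum>k. ennreal (V * 2^n * R powr (real n - g) * \<rho>^k)) \<noteq> top"
      using V \<rho> by (intro ennreal_suminf_neq_top) auto
    thus ?thesis by (simp add: top.not_eq_extremum)
  qed
  finally show ?thesis .
qed

lemma in_Lp_decay:
  fixes f :: "real^'n \<Rightarrow> real" and R C b r :: real
  assumes meas: "f \<in> borel_measurable lebesgue" and pos: "\<And>x. f x > 0"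
    and bdd: "bdd_above (range f)"
    and dec: "\<And>x. norm x \<ge> R \<Longrightarrow> f x \<le> C * norm x powr (-b)"
    and r: "r > 0" and br: "b * r > real CARD('n)"
  shows "in_Lp r f"
proof -
  define R' where "R' = max R 1"
  define C' where "C' = max C 1"
  obtain B where B: "\<And>x. f x \<le> B" using bdd by (auto simp: bdd_above_def)
  have R': "R' > 0" "R \<le> R'" by (auto simp: R'_def)
  have C': "C' > 0" by (auto simp: C'_def)
  define h where "h x = ennreal (B powr r) * indicator (cball (0::real^'n) R') x +
      ennreal (C' powr r) * (indicator {x::real^'n. R' \<le> norm x} x * ennreal (norm x powr (-(b*r))))" for x
  have pt: "ennreal (\<bar>f x\<bar> powr r) \<le> h x" for x
  proof (cases "norm x \<le> R'")
    case True
    have "\<bar>f x\<bar> powr r \<le> B powr r" using pos[of x] B[of x] r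
      by (auto intro!: powr_mono2)
    hence "ennreal (\<bar>f x\<bar> powr r) \<le> ennreal (B powr r) * indicator (cball (0::real^'n) R') x"
      using True by (auto intro: ennreal_leI)
    also have "\<dots> \<le> h x" unfolding h_def by simp
    finally show ?thesis .
  next
    case False
    have nx: "norm x > 0" using False R' by auto
    have "f x \<le> C * norm x powr (-b)" using dec[of x] False R' by auto
    also have "\<dots> \<le> C' * norm x powr (-b)" unfolding C'_def by (intro mult_right_mono) auto
    finally have "\<bar>f x\<bar> powr r \<le> (C' * norm x powr (-b)) powr r" using pos[of x] r
      by (auto intro!: powr_mono2)
    also have "\<dots> = C' powr r * norm x powr (-(b*r))"
      using C' nx by (simp add: powr_mult powr_powr)
    finally have "ennreal (\<bar>f x\<bar> powr r) \<le> ennreal (C' powr r) * (indicator {x::real^'n. R' \<le> norm x} x * ennreal (norm x powr (-(b*r))))"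
      using False by (auto simp: ennreal_mult'[symmetric] intro: ennreal_leI)
    also have "\<dots> \<le> h x" unfolding h_def by simp
    finally show ?thesis .
  qed
  have m1: "(\<lambda>x. ennreal (B powr r) * indicator (cball (0::real^'n) R') x) \<in> borel_measurable lborel"
    by (intro borel_measurable_times_ennreal borel_measurable_const borel_measurable_indicator) (auto intro: borel_closed)
  have m2: "(\<lambda>x. ennreal (C' powr r) * (indicator {x::real^'n. R' \<le> norm x} x * ennreal (norm x powr (-(b*r))))) \<in> borel_measurable lborel"
    by measurable
  have "(\<integral>\<^sup>+ x. ennreal (\<bar>f x\<bar> powr r) \<partial>lebesgue) \<le> (\<integral>\<^sup>+ x. h x \<partial>lebesgue)"
    by (rule nn_integral_mono) (rule pt)
  also have "\<dots> = (\<integral>\<^sup>+ x. h x \<partial>lborel)" by (rule nn_integral_completion)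
  also have "\<dots> = ennreal (B powr r) * emeasure lborel (cball (0::real^'n) R') +
      ennreal (C' powr r) * (\<integral>\<^sup>+x. indicator {x::real^'n. R' \<le> norm x} x * ennreal (norm x powr (-(b*r))) \<partial>lborel)"
    unfolding h_def by (subst nn_integral_add[OF m1 m2]) (simp add: nn_integral_cmult_indicator nn_integral_cmult)
  also have "\<dots> < \<infinity>"
  proof -
    have "(\<integral>\<^sup>+x. indicator {x::real^'n. R' \<le> norm x} x * ennreal (norm x powr (-(b*r))) \<partial>lborel) < \<infinity>"
      using tail_integral[where 'a="real^'n" and g="b*r" and R=R'] br R' by simp
    moreover have "emeasure lborel (cball (0::real^'n) R') < \<infinity>" by (rule emeasure_lborel_cball_finite)
    ultimately show ?thesis by (simp add: ennreal_mult_less_top ennreal_add_less_top)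
  qed
  finally show ?thesis unfolding in_Lp_def using meas by simp
qed

theorem proposition4p6:
  fixes u v :: "real ^ 'n \<Rightarrow> real" and \<alpha> p q :: real
  assumes n3: "CARD('n) \<ge> 3"
    and alpha: "0 < \<alpha>" "\<alpha> < real CARD('n)"
    and pq: "0 < p" "0 < q" "p * q > 1" "p \<le> q"
    and crit: "1 / (p + 1) + 1 / (q + 1) \<le> (real CARD('n) - \<alpha>) / real CARD('n)"
    and upos: "\<And>x. u x > 0" and vpos: "\<And>x. v x > 0"
    and umeas: "u \<in> borel_measurable lebesgue" and vmeas: "v \<in> borel_measurable lebesgue"
    and ueq: "\<And>x. ennreal (u x) = riesz_pot \<alpha> (\<lambda>y. v y powr q) x"
    and veq: "\<And>x. ennreal (v x) = riesz_pot \<alpha> (\<lambda>y. u y powr p) x"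
    and ubdd: "bdd_above (range u)" and vbdd: "bdd_above (range v)"
    and uasym: "asym_equiv u (\<lambda>x. norm x powr (\<alpha> - real CARD('n)))"
    and vasym1: "p * (real CARD('n) - \<alpha>) > real CARD('n) \<Longrightarrow>
        asym_equiv v (\<lambda>x. norm x powr (\<alpha> - real CARD('n)))"
    and vasym2: "p * (real CARD('n) - \<alpha>) = real CARD('n) \<Longrightarrow>
        asym_equiv v (\<lambda>x. norm x powr (\<alpha> - real CARD('n)) * ln (norm x))"
    and vasym3: "p * (real CARD('n) - \<alpha>) < real CARD('n) \<Longrightarrow>
        asym_equiv v (\<lambda>x. norm x powr ((\<alpha> - real CARD('n)) * (p + 1) + real CARD('n)))"
  shows "in_Lp (real CARD('n) * (p * q - 1) / (\<alpha> * (q + 1))) u \<and>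
         in_Lp (real CARD('n) * (p * q - 1) / (\<alpha> * (p + 1))) v"
proof -
  define N where "N = real CARD('n)"
  have N: "N > 0" unfolding N_def by simp
  have a: "0 < \<alpha>" "\<alpha> < N" using alpha unfolding N_def by auto
  have p: "0 < p" "0 < q" "p*q > 1" using pq by auto
  have crit': "1 / (p + 1) + 1 / (q + 1) \<le> (N - \<alpha>) / N" using crit unfolding N_def .
  have key: "\<alpha>*(p+1)*(q+1) \<le> N*(p*q-1)"
  proof -
    have "1 / (p + 1) + 1 / (q + 1) = (p+q+2)/((p+1)*(q+1))" using p by (simp add: field_simps)
    hence "(p+q+2)/((p+1)*(q+1)) \<le> (N - \<alpha>) / N" using crit' by simp
    hence "(p+q+2)*N \<le> (N-\<alpha>)*((p+1)*(q+1))" using p N by (simp add: divide_simps)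
    thus ?thesis by (simp add: algebra_simps)
  qed
  have base: "(N-\<alpha>)*(p*q-1) \<ge> \<alpha>*(p+q+2)"
  proof -
    have "\<alpha>*(p+1)*(q+1) - \<alpha>*(p*q-1) = \<alpha>*(p+q+2)" by (simp add: algebra_simps)
    moreover have "(N-\<alpha>)*(p*q-1) = N*(p*q-1) - \<alpha>*(p*q-1)" by (simp add: algebra_simps)
    ultimately show ?thesis using key by linarith
  qed
  have ap: "\<alpha>*(p+1) > 0" "\<alpha>*(q+1) > 0" "\<alpha>*q > 0" "\<alpha>*p > 0" using a p by auto
  have expok: "b * (N*(p*q-1)/D) > N" if "b*(p*q-1) > D" "D > 0" for b D
  proof -
    have "b * (N*(p*q-1)/D) = N*(b*(p*q-1))/D" by simp
    also have "\<dots> > N*D/D" using that N by (intro divide_strict_right_mono mult_strict_left_mono) auto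
    finally show ?thesis using that by simp
  qed
  have r0: "real CARD('n) * (p * q - 1) / (\<alpha> * (q + 1)) > 0" and s0: "real CARD('n) * (p * q - 1) / (\<alpha> * (p + 1)) > 0"
    using ap p by auto
  have "in_Lp (real CARD('n) * (p * q - 1) / (\<alpha> * (q + 1))) u"
  proof -
    obtain C R where CR: "\<And>x. norm x \<ge> R \<Longrightarrow> u x \<le> C * norm x powr (\<alpha> - real CARD('n))"
      using uasym unfolding asym_equiv_def by blast
    have "(N-\<alpha>)*(p*q-1) > \<alpha>*(q+1)" using base ap by (simp add: algebra_simps)
    from expok[OF this ap(2)]
    show ?thesis unfolding N_def
      by (intro in_Lp_decay[where R=R and C=C and b="real CARD('n) - \<alpha>"] umeas upos ubdd r0)
         (use CR in auto)
  qed
  moreover have "in_Lp (real CARD('n) * (p * q - 1) / (\<alpha> * (p + 1))) v"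
  proof (cases "p * (N - \<alpha>) > N")
    case True
    obtain C R where CR: "\<And>x. norm x \<ge> R \<Longrightarrow> v x \<le> C * norm x powr (\<alpha> - real CARD('n))"
      using vasym1 True unfolding asym_equiv_def N_def by blast
    have "(N-\<alpha>)*(p*q-1) > \<alpha>*(p+1)" using base ap by (simp add: algebra_simps)
    from expok[OF this ap(1)]
    show ?thesis unfolding N_def
      by (intro in_Lp_decay[where R=R and C=C and b="real CARD('n) - \<alpha>"] vmeas vpos vbdd s0)
         (use CR in auto)
  next
    case False
    show ?thesis
    proof (cases "p * (N - \<alpha>) = N")
      case True
      obtain C R where C: "C > 0" and CR: "\<And>x. norm x \<ge> R \<Longrightarrow> v x \<le> C * (norm x powr (\<alpha> - real CARD('n)) * ln (norm x))"
        using vasym2 True unfolding asym_equiv_def N_def by blast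
      define \<delta> where "\<delta> = \<alpha>*(q+1)/(2*(p*q-1))"
      have \<delta>: "\<delta> > 0" unfolding \<delta>_def using ap p by auto
      have d2: "\<delta>*(p*q-1) = \<alpha>*(q+1)/2" unfolding \<delta>_def using p by (simp add: field_simps)
      have "(N-\<alpha>-\<delta>)*(p*q-1) > \<alpha>*(p+1)"
      proof -
        have "(N-\<alpha>-\<delta>)*(p*q-1) = (N-\<alpha>)*(p*q-1) - \<delta>*(p*q-1)" by (simp add: algebra_simps)
        thus ?thesis using base d2 ap by (simp add: algebra_simps)
      qed
      from expok[OF this ap(1)]
      have ex: "(real CARD('n) - \<alpha> - \<delta>) * (real CARD('n) * (p * q - 1) / (\<alpha> * (p + 1))) > real CARD('n)"
        unfolding N_def .
      have dec: "v x \<le> (C/\<delta>) * norm x powr (-(real CARD('n) - \<alpha> - \<delta>))" if "norm x \<ge> max R 1" for x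
      proof -
        have x1: "norm x \<ge> 1" "norm x \<ge> R" using that by auto
        have "v x \<le> C * (norm x powr (\<alpha> - real CARD('n)) * ln (norm x))" using CR x1 by auto
        also have "\<dots> \<le> C * (norm x powr (\<alpha> - real CARD('n)) * (norm x powr \<delta> / \<delta>))"
          using C x1 \<delta> by (intro mult_left_mono ln_powr_bound) auto
        also have "\<dots> = (C/\<delta>) * norm x powr (-(real CARD('n) - \<alpha> - \<delta>))"
          using x1 by (simp add: powr_add[symmetric] algebra_simps)
        finally show ?thesis .
      qed
      show ?thesis
        by (rule in_Lp_decay[where R="max R 1" and C="C/\<delta>" and b="real CARD('n) - \<alpha> - \<delta>"])
           (use vmeas vpos vbdd s0 dec ex in auto)
    next
      case False2: False
      hence lt: "p * (N - \<alpha>) < N" using False by linarith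
      obtain C R where CR: "\<And>x. norm x \<ge> R \<Longrightarrow> v x \<le> C * norm x powr ((\<alpha> - real CARD('n)) * (p + 1) + real CARD('n))"
        using vasym3 lt unfolding asym_equiv_def N_def by blast
      define b where "b = N*p - \<alpha>*(p+1)"
      have eb: "(\<alpha> - real CARD('n)) * (p + 1) + real CARD('n) = -b" unfolding b_def N_def by (simp add: algebra_simps)
      have "b*(p*q-1) > \<alpha>*(p+1)"
      proof -
        have "p*(\<alpha>*(p+1)*(q+1)) \<le> p*(N*(p*q-1))" using key p by (intro mult_left_mono) auto
        moreover have "b*(p*q-1) = p*(N*(p*q-1)) - \<alpha>*(p+1)*(p*q-1)" unfolding b_def by (simp add: algebra_simps)
        moreover have "p*(\<alpha>*(p+1)*(q+1)) - \<alpha>*(p+1)*(p*q-1) = \<alpha>*(p+1)*(p+1)" by (simp add: algebra_simps)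
        moreover have "\<alpha>*(p+1)*(p+1) > \<alpha>*(p+1)" using ap p mult_strict_left_mono[of 1 "p+1" "\<alpha>*(p+1)"] by simp
        ultimately show ?thesis by linarith
      qed
      from expok[OF this ap(1)]
      show ?thesis unfolding N_def
        by (intro in_Lp_decay[where R=R and C=C and b=b] vmeas vpos vbdd s0)
           (use CR eb in auto)
    qed
  qed
  ultimately show ?thesis ..
qed

end
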